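(* Let $(U,G,\Gamma)$ be a preuniformizer for an étale category $\mathcal B=(B,\mathbf B)$. Then: (i) For every $x\in U$, the semigroup $\mathrm{Mor}_{\mathcal B}(x,x)$ is isomorphic via $g\mapsto\Gamma(g,x)$ to the subgroup $G_x=\{g\in G\mid g*x=x\}$; in particular $\mathrm{Mor}_{\mathcal B}(x,x)$ is a group, and these groups are isomorphic as $x$ varies in a $G$-orbit. (ii) $|U|=\pi_{\mathcal B}(U)$ is open in $|\mathcal B|$, and the induced map $|\Gamma|:U/G\to|U|$ is a local homeomorphism (quotient topology on $U/G$, subspace topology on $|U|$). (iii) If $\mathcal B$ is a groupoid and $(U,G,\Gamma)$ is a local uniformizer, then $|\Gamma|:U/G\to|U|$ is injective, hence a homeomorphism.
   Context: Fix one of the "étale classes": (a) metrizable spaces with local homeomorphisms; (b) finite-dimensional second countable topological manifolds with local homeomorphisms; (c) finite-dimensional second countable smooth manifolds (possibly with boundary and corners) with local diffeomorphisms; (d) M-polyfolds with local sc-diffeomorphisms; spaces/maps in it are étale spaces/maps. An étale category $\mathcal B=(B,\mathbf B)$ is a topological category whose object and morphism spaces are étale spaces and whose source, target, unit and composition maps are étale; composition $m\circ m'$ is defined when $t(m)=s(m')$ (first $m$ then $m'$). $\mathrm{Mor}_{\mathcal B}(U_1,U_2)=s^{-1}(U_1)\cap t^{-1}(U_2)$. The realization $|\mathcal B|=B/{\sim_{\mathcal B}}$ (equivalence relation generated by existence of morphisms) has the quotient topology and quotient map $\pi_{\mathcal B}$. A preuniformizer $(U,G,\Gamma)$ for $\mathcal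 B$ consists of an open subset $U\subset B$, an étale left action $G\times U\to U$, $(g,y)\mapsto g*y$, of a finite group $G$, and an étale injection $\Gamma:G\times U\to\mathrm{Mor}_{\mathcal B}(U,U)$ such that (a) $s(\Gamma(g,y))=y$, $t(\Gamma(g,y))=g*y$, $\Gamma(hg,y)=\Gamma(g,y)\circ\Gamma(h,g*y)$; (b) $\Gamma(G\times U)$ contains every connected component of $\mathrm{Mor}_{\mathcal B}(U,U)$ containing a morphism $m$ with $s(m)=t(m)$; (c) the induced map $|\Gamma|:U/G\to|\mathcal B|$ is locally injective and $\sup_{p\in|U|}\#\{[x]\in U/G: \pi_{\mathcal B}(x)=p\}<\infty$. If $\mathcal B$ is a groupoid and $\Gamma$ is surjective onto $\mathrm{Mor}_{\mathcal B}(U,U)$, $(U,G,\Gamma)$ is called a local uniformizer. *)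

theory Defs
  imports "HOL-Analysis.Analysis" "HOL-Algebra.Group"
begin

definition local_homeo :: "'a topology \<Rightarrow> 'b topology \<Rightarrow> ('a \<Rightarrow> 'b) \<Rightarrow> bool" where
  "local_homeo X Y f \<longleftrightarrow> f ` topspace X \<subseteq> topspace Y \<and>
     (\<forall>x\<in>topspace X. \<exists>V. openin X V \<and> x \<in> V \<and> openin Y (f ` V) \<and>
        homeomorphic_map (subtopology X V) (subtopology Y (f ` V)) f)"

definition quotient_topology :: "'a topology \<Rightarrow> ('a \<Rightarrow> 'b) \<Rightarrow> 'b topology" where
  "quotient_topology X q =
     topology (\<lambda>S. S \<subseteq> q ` topspace X \<and> openin X {x \<in> topspace X. q x \<in> S})"

lemma istopology_quotient: "istopology (\<lambda>S. S \<subseteq> q ` topspace X \<and> openin X {x \<in> topspace X. q x \<in> S})"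
proof -
  have I: "{x \<in> topspace X. q x \<in> S \<inter> T} = {x \<in> topspace X. q x \<in> S} \<inter> {x \<in> topspace X. q x \<in> T}" for S T
    by auto
  have U: "{x \<in> topspace X. q x \<in> \<Union>K} = (\<Union>S\<in>K. {x \<in> topspace X. q x \<in> S})" for K
    by auto
  show ?thesis
    unfolding istopology_def I U by auto
qed

lemma openin_quotient_topology:
  "openin (quotient_topology X q) S \<longleftrightarrow> S \<subseteq> q ` topspace X \<and> openin X {x \<in> topspace X. q x \<in> S}"
  unfolding quotient_topology_def topology_inverse'[OF istopology_quotient] by (rule refl)

text \<open>An etale category: object space OB, morphism space MB, source s, target t,
  unit e and composition cmp, where cmp m m' (first m, then m') is defined when t m = s m'.\<close>

definition comp_space :: "'m topology \<Rightarrow> ('m \<Rightarrow> 'a) \<Rightarrow> ('m \<Rightarrow> 'a) \<Rightarrow> ('m \<times> 'm) topology" where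
  "comp_space MB s t = subtopology (prod_topology MB MB)
      {(m, m'). m \<in> topspace MB \<and> m' \<in> topspace MB \<and> t m = s m'}"

definition etale_category ::
  "'a topology \<Rightarrow> 'm topology \<Rightarrow> ('m \<Rightarrow> 'a) \<Rightarrow> ('m \<Rightarrow> 'a) \<Rightarrow> ('a \<Rightarrow> 'm) \<Rightarrow> ('m \<Rightarrow> 'm \<Rightarrow> 'm) \<Rightarrow> bool" where
  "etale_category OB MB s t e cmp \<longleftrightarrow>
     metrizable_space OB \<and> metrizable_space MB \<and>
     local_homeo MB OB s \<and> local_homeo MB OB t \<and> local_homeo OB MB e \<and>
     local_homeo (comp_space MB s t) MB (\<lambda>(m, m'). cmp m m') \<and>
     (\<forall>x\<in>topspace OB. s (e x) = x \<and> t (e x) = x) \<and>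
     (\<forall>m\<in>topspace MB. cmp (e (s m)) m = m \<and> cmp m (e (t m)) = m) \<and>
     (\<forall>m\<in>topspace MB. \<forall>m'\<in>topspace MB. t m = s m' \<longrightarrow>
          s (cmp m m') = s m \<and> t (cmp m m') = t m') \<and>
     (\<forall>m\<in>topspace MB. \<forall>m'\<in>topspace MB. \<forall>m''\<in>topspace MB. t m = s m' \<longrightarrow> t m' = s m'' \<longrightarrow>
          cmp (cmp m m') m'' = cmp m (cmp m' m''))"

definition is_groupoid :: "'a topology \<Rightarrow> 'm topology \<Rightarrow> ('m \<Rightarrow> 'a) \<Rightarrow> ('m \<Rightarrow> 'a) \<Rightarrow> ('a \<Rightarrow> 'm) \<Rightarrow> ('m \<Rightarrow> 'm \<Rightarrow> 'm) \<Rightarrow> bool" where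
  "is_groupoid OB MB s t e cmp \<longleftrightarrow>
     (\<forall>m\<in>topspace MB. \<exists>m'\<in>topspace MB. s m' = t m \<and> t m' = s m \<and>
         cmp m m' = e (s m) \<and> cmp m' m = e (t m))"

definition Mor :: "'m topology \<Rightarrow> ('m \<Rightarrow> 'a) \<Rightarrow> ('m \<Rightarrow> 'a) \<Rightarrow> 'a set \<Rightarrow> 'a set \<Rightarrow> 'm set" where
  "Mor MB s t U1 U2 = {m \<in> topspace MB. s m \<in> U1 \<and> t m \<in> U2}"

definition morrel :: "'m topology \<Rightarrow> ('m \<Rightarrow> 'a) \<Rightarrow> ('m \<Rightarrow> 'a) \<Rightarrow> ('a \<times> 'a) set" where
  "morrel MB s t = (let R = {(s m, t m) | m. m \<in> topspace MB} in (R \<union> R\<inverse>)\<^sup>*)"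

definition piB :: "'m topology \<Rightarrow> ('m \<Rightarrow> 'a) \<Rightarrow> ('m \<Rightarrow> 'a) \<Rightarrow> 'a \<Rightarrow> 'a set" where
  "piB MB s t x = morrel MB s t `` {x}"

definition realization :: "'a topology \<Rightarrow> 'm topology \<Rightarrow> ('m \<Rightarrow> 'a) \<Rightarrow> ('m \<Rightarrow> 'a) \<Rightarrow> 'a set topology" where
  "realization OB MB s t = quotient_topology OB (piB MB s t)"

definition orbG :: "('g, 'b) monoid_scheme \<Rightarrow> ('g \<Rightarrow> 'a \<Rightarrow> 'a) \<Rightarrow> 'a \<Rightarrow> 'a set" where
  "orbG G act y = {act g y | g. g \<in> carrier G}"

definition orbit_space :: "'a topology \<Rightarrow> 'a set \<Rightarrow> ('g, 'b) monoid_scheme \<Rightarrow> ('g \<Rightarrow> 'a \<Rightarrow> 'a) \<Rightarrow> 'a set topology" where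
  "orbit_space OB U G act = quotient_topology (subtopology OB U) (orbG G act)"

definition Gamma_bar :: "'m topology \<Rightarrow> ('m \<Rightarrow> 'a) \<Rightarrow> ('m \<Rightarrow> 'a) \<Rightarrow> 'a set \<Rightarrow> 'a set" where
  "Gamma_bar MB s t Q = piB MB s t (SOME y. y \<in> Q)"

definition preuniformizer ::
  "'a topology \<Rightarrow> 'm topology \<Rightarrow> ('m \<Rightarrow> 'a) \<Rightarrow> ('m \<Rightarrow> 'a) \<Rightarrow> ('a \<Rightarrow> 'm) \<Rightarrow> ('m \<Rightarrow> 'm \<Rightarrow> 'm) \<Rightarrow>
   'a set \<Rightarrow> ('g, 'b) monoid_scheme \<Rightarrow> ('g \<Rightarrow> 'a \<Rightarrow> 'a) \<Rightarrow> ('g \<Rightarrow> 'a \<Rightarrow> 'm) \<Rightarrow> bool" where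
  "preuniformizer OB MB s t e cmp U G act \<Gamma> \<longleftrightarrow>
     openin OB U \<and> group G \<and> finite (carrier G) \<and>
     \<comment> \<open>etale left action\<close>
     (\<forall>g\<in>carrier G. \<forall>y\<in>U. act g y \<in> U) \<and>
     (\<forall>y\<in>U. act \<one>\<^bsub>G\<^esub> y = y) \<and>
     (\<forall>g\<in>carrier G. \<forall>h\<in>carrier G. \<forall>y\<in>U. act (h \<otimes>\<^bsub>G\<^esub> g) y = act h (act g y)) \<and>
     local_homeo (prod_topology (discrete_topology (carrier G)) (subtopology OB U)) (subtopology OB U)
        (\<lambda>(g, y). act g y) \<and>
     \<comment> \<open>etale injection Gamma into Mor(U,U)\<close>
     local_homeo (prod_topology (discrete_topology (carrier G)) (subtopology OB U))
        (subtopology MB (Mor MB s t U U)) (\<lambda>(g, y). \<Gamma> g y) \<and>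
     inj_on (\<lambda>(g, y). \<Gamma> g y) (carrier G \<times> U) \<and>
     \<comment> \<open>(a)\<close>
     (\<forall>g\<in>carrier G. \<forall>y\<in>U. s (\<Gamma> g y) = y \<and> t (\<Gamma> g y) = act g y) \<and>
     (\<forall>g\<in>carrier G. \<forall>h\<in>carrier G. \<forall>y\<in>U.
        \<Gamma> (h \<otimes>\<^bsub>G\<^esub> g) y = cmp (\<Gamma> g y) (\<Gamma> h (act g y))) \<and>
     \<comment> \<open>(b)\<close>
     (\<forall>m\<in>Mor MB s t U U. s m = t m \<longrightarrow>
        connected_component_of_set (subtopology MB (Mor MB s t U U)) m
          \<subseteq> (\<lambda>(g, y). \<Gamma> g y) ` (carrier G \<times> U)) \<and>
     \<comment> \<open>(c)\<close>
     (\<forall>Q\<in>topspace (orbit_space OB U G act). \<exists>W. openin (orbit_space OB U G act) W \<and> Q \<in> W \<and>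
        inj_on (Gamma_bar MB s t) W) \<and>
     (\<exists>N::nat. \<forall>p\<in>piB MB s t ` U.
        finite {Q \<in> topspace (orbit_space OB U G act). Gamma_bar MB s t Q = p} \<and>
        card {Q \<in> topspace (orbit_space OB U G act). Gamma_bar MB s t Q = p} \<le> N)"

definition MorGroup :: "'m topology \<Rightarrow> ('m \<Rightarrow> 'a) \<Rightarrow> ('m \<Rightarrow> 'a) \<Rightarrow> ('a \<Rightarrow> 'm) \<Rightarrow> ('m \<Rightarrow> 'm \<Rightarrow> 'm) \<Rightarrow> 'a \<Rightarrow> 'm monoid" where
  "MorGroup MB s t e cmp x = \<lparr>carrier = Mor MB s t {x} {x}, mult = cmp, one = e x\<rparr>"

definition stabilizer :: "('g, 'b) monoid_scheme \<Rightarrow> ('g \<Rightarrow> 'a \<Rightarrow> 'a) \<Rightarrow> 'a \<Rightarrow> 'g set" where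
  "stabilizer G act x = {g \<in> carrier G. act g x = x}"

end

theory Submission imports Defs begin

lemma lh_image: "local_homeo X Y f \<Longrightarrow> f ` topspace X \<subseteq> topspace Y"
  unfolding local_homeo_def by blast

lemma lh_open:
  assumes lh: "local_homeo X Y f" and V: "openin X V"
  shows "openin Y (f ` V)"
proof (subst openin_subopen, intro ballI)
  fix y assume "y \<in> f ` V"
  then obtain x where x: "x \<in> V" "y = f x" by blast
  with openin_subset[OF V] have "x \<in> topspace X" by blast
  then obtain W where W: "openin X W" "x \<in> W" "openin Y (f ` W)"
    "homeomorphic_map (subtopology X W) (subtopology Y (f ` W)) f"
    using lh unfolding local_homeo_def by blast
  have "openin (subtopology X W) (V \<inter> W)"
    using V W(1) by (simp add: openin_open_subtopology openin_Int)
  then have "openin (subtopology Y (f ` W)) (f ` (V \<inter> W))"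
    using homeomorphic_imp_open_map[OF W(4)] unfolding open_map_def by blast
  then have "openin Y (f ` (V \<inter> W))" using W(3) openin_trans_full by blast
  then show "\<exists>T. openin Y T \<and> y \<in> T \<and> T \<subseteq> f ` V"
    using x W(2) by blast
qed

lemma lh_cont:
  assumes lh: "local_homeo X Y f"
  shows "continuous_map X Y f"
  unfolding continuous_map
proof (intro conjI allI impI)
  show "f ` topspace X \<subseteq> topspace Y" using lh_image[OF lh] .
  fix Ov assume Ov: "openin Y Ov"
  show "openin X {x \<in> topspace X. f x \<in> Ov}"
  proof (subst openin_subopen, intro ballI)
    fix x assume "x \<in> {x \<in> topspace X. f x \<in> Ov}"
    hence x: "x \<in> topspace X" "f x \<in> Ov" by auto
    then obtain W where W: "openin X W" "x \<in> W" "openin Y (f ` W)"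
      "homeomorphic_map (subtopology X W) (subtopology Y (f ` W)) f"
      using lh unfolding local_homeo_def by blast
    have c: "continuous_map (subtopology X W) (subtopology Y (f ` W)) f"
      using W(4) homeomorphic_imp_continuous_map by blast
    have "openin (subtopology Y (f ` W)) (Ov \<inter> f ` W)"
      using Ov by (simp add: openin_subtopology_Int)
    then have "openin (subtopology X W) {z \<in> topspace (subtopology X W). f z \<in> Ov \<inter> f ` W}"
      using c unfolding continuous_map by blast
    moreover have "{z \<in> topspace (subtopology X W). f z \<in> Ov \<inter> f ` W} = W \<inter> {x \<in> topspace X. f x \<in> Ov}"
      using openin_subset[OF W(1)] by auto
    ultimately have "openin X (W \<inter> {x \<in> topspace X. f x \<in> Ov})"
      using W(1) openin_trans_full by metis
    then show "\<exists>T. openin X T \<and> x \<in> T \<and> T \<subseteq> {x \<in> topspace X. f x \<in> Ov}"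
      using x W(2) by blast
  qed
qed

lemma topspace_quotient: "topspace (quotient_topology X q) = q ` topspace X"
proof -
  have "openin (quotient_topology X q) (q ` topspace X)"
  proof -
    have "{x \<in> topspace X. q x \<in> q ` topspace X} = topspace X" by auto
    then show ?thesis by (simp add: openin_quotient_topology)
  qed
  moreover have "\<And>S. openin (quotient_topology X q) S \<Longrightarrow> S \<subseteq> q ` topspace X"
    by (simp add: openin_quotient_topology)
  ultimately show ?thesis by (metis openin_subset subset_antisym openin_topspace)
qed

lemma cat_facts:
  assumes "etale_category OB MB s t e cmp"
  shows "\<And>x. x \<in> topspace OB \<Longrightarrow> e x \<in> topspace MB"
    and "\<And>m. m \<in> topspace MB \<Longrightarrow> s m \<in> topspace OB"
    and "\<And>m. m \<in> topspace MB \<Longrightarrow> t m \<in> topspace OB"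
    and "\<And>m m'. m \<in> topspace MB \<Longrightarrow> m' \<in> topspace MB \<Longrightarrow> t m = s m' \<Longrightarrow> cmp m m' \<in> topspace MB"
    and "\<And>x. x \<in> topspace OB \<Longrightarrow> s (e x) = x"
    and "\<And>x. x \<in> topspace OB \<Longrightarrow> t (e x) = x"
    and "\<And>m. m \<in> topspace MB \<Longrightarrow> cmp (e (s m)) m = m"
    and "\<And>m. m \<in> topspace MB \<Longrightarrow> cmp m (e (t m)) = m"
    and "\<And>m m'. m \<in> topspace MB \<Longrightarrow> m' \<in> topspace MB \<Longrightarrow> t m = s m' \<Longrightarrow> s (cmp m m') = s m"
    and "\<And>m m'. m \<in> topspace MB \<Longrightarrow> m' \<in> topspace MB \<Longrightarrow> t m = s m' \<Longrightarrow> t (cmp m m') = t m'"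
    and "\<And>m m' m''. m \<in> topspace MB \<Longrightarrow> m' \<in> topspace MB \<Longrightarrow> m'' \<in> topspace MB \<Longrightarrow> t m = s m' \<Longrightarrow> t m' = s m'' \<Longrightarrow>
          cmp (cmp m m') m'' = cmp m (cmp m' m'')"
    and "continuous_map MB OB s" and "continuous_map MB OB t"
    and "\<And>V. openin MB V \<Longrightarrow> openin OB (s ` V)"
    and "\<And>V. openin MB V \<Longrightarrow> openin OB (t ` V)"
proof -
  have D: "local_homeo MB OB s" "local_homeo MB OB t" "local_homeo OB MB e"
     "local_homeo (comp_space MB s t) MB (\<lambda>(m, m'). cmp m m')"
     "\<forall>x\<in>topspace OB. s (e x) = x \<and> t (e x) = x"
     "\<forall>m\<in>topspace MB. cmp (e (s m)) m = m \<and> cmp m (e (t m)) = m"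
     "\<forall>m\<in>topspace MB. \<forall>m'\<in>topspace MB. t m = s m' \<longrightarrow>
          s (cmp m m') = s m \<and> t (cmp m m') = t m'"
     "\<forall>m\<in>topspace MB. \<forall>m'\<in>topspace MB. \<forall>m''\<in>topspace MB. t m = s m' \<longrightarrow> t m' = s m'' \<longrightarrow>
          cmp (cmp m m') m'' = cmp m (cmp m' m'')"
    using assms unfolding etale_category_def by simp_all
  show "\<And>x. x \<in> topspace OB \<Longrightarrow> e x \<in> topspace MB" using lh_image[OF D(3)] by blast
  show "\<And>m. m \<in> topspace MB \<Longrightarrow> s m \<in> topspace OB" using lh_image[OF D(1)] by blast
  show "\<And>m. m \<in> topspace MB \<Longrightarrow> t m \<in> topspace OB" using lh_image[OF D(2)] by blast
  show "\<And>m m'. m \<in> topspace MB \<Longrightarrow> m' \<in> topspace MB \<Longrightarrow> t m = s m' \<Longrightarrow> cmp m m' \<in> topspace MB"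
  proof -
    fix m m' assume "m \<in> topspace MB" "m' \<in> topspace MB" "t m = s m'"
    then have "(m, m') \<in> topspace (comp_space MB s t)"
      by (simp add: comp_space_def)
    then show "cmp m m' \<in> topspace MB"
      using lh_image[OF D(4)] by force
  qed
  show "continuous_map MB OB s" "continuous_map MB OB t" using lh_cont D(1,2) by blast+
  show "\<And>V. openin MB V \<Longrightarrow> openin OB (s ` V)" "\<And>V. openin MB V \<Longrightarrow> openin OB (t ` V)"
    using lh_open D(1,2) by blast+
  show "\<And>x. x \<in> topspace OB \<Longrightarrow> s (e x) = x" "\<And>x. x \<in> topspace OB \<Longrightarrow> t (e x) = x"
    using D(5) by blast+
  show "\<And>m. m \<in> topspace MB \<Longrightarrow> cmp (e (s m)) m = m" "\<And>m. m \<in> topspace MB \<Longrightarrow> cmp m (e (t m)) = m"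
    using D(6) by blast+
  show "\<And>m m'. m \<in> topspace MB \<Longrightarrow> m' \<in> topspace MB \<Longrightarrow> t m = s m' \<Longrightarrow> s (cmp m m') = s m"
    "\<And>m m'. m \<in> topspace MB \<Longrightarrow> m' \<in> topspace MB \<Longrightarrow> t m = s m' \<Longrightarrow> t (cmp m m') = t m'"
    using D(7) by blast+
  show "\<And>m m' m''. m \<in> topspace MB \<Longrightarrow> m' \<in> topspace MB \<Longrightarrow> m'' \<in> topspace MB \<Longrightarrow> t m = s m' \<Longrightarrow> t m' = s m'' \<Longrightarrow>
          cmp (cmp m m') m'' = cmp m (cmp m' m'')" using D(8) by blast
qed

lemma morrel_equiv: "equiv UNIV (morrel MB s t)"
  unfolding morrel_def Let_def
  by (rule equivI) (simp_all add: refl_rtrancl sym_rtrancl[OF sym_Un_converse] trans_rtrancl)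

lemma piB_eq: "piB MB s t x = piB MB s t y \<longleftrightarrow> (x, y) \<in> morrel MB s t"
  unfolding piB_def using equiv_class_eq_iff[OF morrel_equiv[of MB s t], of x y] by simp

lemma morrel_step1: "m \<in> topspace MB \<Longrightarrow> (s m, t m) \<in> morrel MB s t"
  unfolding morrel_def Let_def by blast

lemma morrel_step2: "m \<in> topspace MB \<Longrightarrow> (t m, s m) \<in> morrel MB s t"
  unfolding morrel_def Let_def by blast

lemma morrel_trans: "(a, b) \<in> morrel MB s t \<Longrightarrow> (b, c) \<in> morrel MB s t \<Longrightarrow> (a, c) \<in> morrel MB s t"
  using morrel_equiv[of MB s t] unfolding equiv_def by (meson transE)

lemma morrel_refl: "(a, a) \<in> morrel MB s t"
  unfolding morrel_def Let_def by simp

lemma morrel_sym: "(a, b) \<in> morrel MB s t \<Longrightarrow> (b, a) \<in> morrel MB s t"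
  using morrel_equiv[of MB s t] unfolding equiv_def by (meson symE)

lemma sat_open:
  assumes cat: "etale_category OB MB s t e cmp" and A: "openin OB A"
  shows "openin OB {x \<in> topspace OB. \<exists>a\<in>A. (a, x) \<in> morrel MB s t}"
proof -
  note cf = cat_facts[OF cat]
  define step where "step = (\<lambda>B. B \<union> t ` {m \<in> topspace MB. s m \<in> B} \<union> s ` {m \<in> topspace MB. t m \<in> B})"
  define St where "St n = (step ^^ n) A" for n
  have St_Suc: "St (Suc n) = St n \<union> t ` {m \<in> topspace MB. s m \<in> St n} \<union> s ` {m \<in> topspace MB. t m \<in> St n}" for n
    by (simp add: St_def step_def)
  have op: "openin OB (St n)" for n
  proof (induction n)
    case 0 then show ?case using A by (simp add: St_def)
  next
    case (Suc n)
    have "openin MB {m \<in> topspace MB. s m \<in> St n}" "openin MB {m \<in> topspace MB. t m \<in> St n}"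
      using Suc cf(12,13) unfolding continuous_map by blast+
    then show ?case unfolding St_Suc using Suc cf(14,15) by (intro openin_Un) auto
  qed
  have sub: "St n \<subseteq> {x \<in> topspace OB. \<exists>a\<in>A. (a, x) \<in> morrel MB s t}" for n
  proof (induction n)
    case 0 then show ?case unfolding St_def using openin_subset[OF A] morrel_refl[of _ MB s t] by auto
  next
    case (Suc n)
    show ?case
    proof
      fix x assume "x \<in> St (Suc n)"
      then have "x \<in> St n \<or> (\<exists>m\<in>topspace MB. s m \<in> St n \<and> x = t m) \<or> (\<exists>m\<in>topspace MB. t m \<in> St n \<and> x = s m)"
        using \<open>x \<in> St (Suc n)\<close> unfolding St_Suc by auto
      then show "x \<in> {x \<in> topspace OB. \<exists>a\<in>A. (a, x) \<in> morrel MB s t}"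
      proof (elim disjE bexE conjE)
        fix m assume m: "m \<in> topspace MB" "s m \<in> St n" "x = t m"
        then obtain a where a: "a \<in> A" "(a, s m) \<in> morrel MB s t" using Suc by blast
        have "(a, t m) \<in> morrel MB s t" using morrel_trans[OF a(2) morrel_step1[OF m(1)]] .
        then show ?thesis using a m cf(3) by blast
      next
        fix m assume m: "m \<in> topspace MB" "t m \<in> St n" "x = s m"
        then obtain a where a: "a \<in> A" "(a, t m) \<in> morrel MB s t" using Suc by blast
        have "(a, s m) \<in> morrel MB s t" using morrel_trans[OF a(2) morrel_step2[OF m(1)]] .
        then show ?thesis using a m cf(2) by blast
      next
        assume "x \<in> St n" then show ?thesis using Suc by blast
      qed
    qed
  qed
  have sup: "(a, x) \<in> morrel MB s t \<Longrightarrow> a \<in> A \<Longrightarrow> \<exists>n. x \<in> St n" for a x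
    unfolding morrel_def Let_def
  proof (induction rule: rtrancl_induct)
    case base then show ?case by (intro exI[of _ 0]) (simp add: St_def)
  next
    case (step y z)
    then obtain n where n: "y \<in> St n" by blast
    from step(2) obtain m where m: "m \<in> topspace MB" "(y = s m \<and> z = t m) \<or> (y = t m \<and> z = s m)" by blast
    then have "z \<in> St (Suc n)"
    proof (elim conjE disjE)
      assume "y = s m" "z = t m"
      then have "z \<in> t ` {m \<in> topspace MB. s m \<in> St n}" using m(1) n by (intro image_eqI[of _ _ m]) auto
      then show ?thesis unfolding St_Suc by (rule UnI1[OF UnI2])
    next
      assume "y = t m" "z = s m"
      then have "z \<in> s ` {m \<in> topspace MB. t m \<in> St n}" using m(1) n by (intro image_eqI[of _ _ m]) auto
      then show ?thesis unfolding St_Suc by (rule UnI2)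
    qed
    then show ?case by blast
  qed
  have "{x \<in> topspace OB. \<exists>a\<in>A. (a, x) \<in> morrel MB s t} = (\<Union>n. St n)"
  proof (rule subset_antisym)
    show "{x \<in> topspace OB. \<exists>a\<in>A. (a, x) \<in> morrel MB s t} \<subseteq> (\<Union>n. St n)"
    proof
      fix x assume "x \<in> {x \<in> topspace OB. \<exists>a\<in>A. (a, x) \<in> morrel MB s t}"
      then obtain a where "a \<in> A" "(a, x) \<in> morrel MB s t" by blast
      then obtain n where "x \<in> St n" using sup by blast
      then show "x \<in> (\<Union>n. St n)" by (rule UN_I[OF UNIV_I])
    qed
    show "(\<Union>n. St n) \<subseteq> {x \<in> topspace OB. \<exists>a\<in>A. (a, x) \<in> morrel MB s t}"
      using sub by (rule UN_least)
  qed
  moreover have "openin OB (\<Union>n. St n)" using op by (intro openin_Union) auto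
  ultimately show ?thesis by simp
qed

lemma piB_image_open:
  assumes cat: "etale_category OB MB s t e cmp" and A: "openin OB A"
  shows "openin (realization OB MB s t) (piB MB s t ` A)"
proof -
  have "{x \<in> topspace OB. piB MB s t x \<in> piB MB s t ` A} = {x \<in> topspace OB. \<exists>a\<in>A. (a, x) \<in> morrel MB s t}"
  proof -
    have "piB MB s t x \<in> piB MB s t ` A \<longleftrightarrow> (\<exists>a\<in>A. (a, x) \<in> morrel MB s t)" for x
      by (simp add: image_iff piB_eq) (meson morrel_sym)
    then show ?thesis by blast
  qed
  then show ?thesis using sat_open[OF cat A] openin_subset[OF A]
    by (auto simp: realization_def openin_quotient_topology)
qed


lemma pre_facts:
  assumes "preuniformizer OB MB s t e cmp U G act \<Gamma>"
  shows "openin OB U" "group G"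
    "\<forall>g\<in>carrier G. \<forall>y\<in>U. act g y \<in> U"
    "\<forall>y\<in>U. act \<one>\<^bsub>G\<^esub> y = y"
    "\<forall>g\<in>carrier G. \<forall>h\<in>carrier G. \<forall>y\<in>U. act (h \<otimes>\<^bsub>G\<^esub> g) y = act h (act g y)"
    "local_homeo (prod_topology (discrete_topology (carrier G)) (subtopology OB U))
        (subtopology MB (Mor MB s t U U)) (\<lambda>(g, y). \<Gamma> g y)"
    "inj_on (\<lambda>(g, y). \<Gamma> g y) (carrier G \<times> U)"
    "\<forall>g\<in>carrier G. \<forall>y\<in>U. s (\<Gamma> g y) = y \<and> t (\<Gamma> g y) = act g y"
    "\<forall>g\<in>carrier G. \<forall>h\<in>carrier G. \<forall>y\<in>U.
        \<Gamma> (h \<otimes>\<^bsub>G\<^esub> g) y = cmp (\<Gamma> g y) (\<Gamma> h (act g y))"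
    "\<forall>m\<in>Mor MB s t U U. s m = t m \<longrightarrow>
        connected_component_of_set (subtopology MB (Mor MB s t U U)) m
          \<subseteq> (\<lambda>(g, y). \<Gamma> g y) ` (carrier G \<times> U)"
    "\<forall>Q\<in>topspace (orbit_space OB U G act). \<exists>W. openin (orbit_space OB U G act) W \<and> Q \<in> W \<and>
        inj_on (Gamma_bar MB s t) W"
  using assms unfolding preuniformizer_def by simp_all

locale PU =
  fixes OB :: "'a topology" and MB :: "'m topology"
    and s t :: "'m \<Rightarrow> 'a" and e :: "'a \<Rightarrow> 'm" and cmp :: "'m \<Rightarrow> 'm \<Rightarrow> 'm"
    and U :: "'a set" and G :: "('g, 'b) monoid_scheme"
    and act :: "'g \<Rightarrow> 'a \<Rightarrow> 'a" and \<Gamma> :: "'g \<Rightarrow> 'a \<Rightarrow> 'm"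
  assumes cat: "etale_category OB MB s t e cmp"
    and pre: "preuniformizer OB MB s t e cmp U G act \<Gamma>"
begin

lemmas cf = cat_facts[OF cat]
lemmas pf = pre_facts[OF pre]

lemma grp: "group G" using pf(2) .
lemma U_open: "openin OB U" using pf(1) .
lemma U_sub: "U \<subseteq> topspace OB" using openin_subset[OF U_open] .

lemma act_U: "g \<in> carrier G \<Longrightarrow> y \<in> U \<Longrightarrow> act g y \<in> U" using pf(3) by blast
lemma act_one: "y \<in> U \<Longrightarrow> act \<one>\<^bsub>G\<^esub> y = y" using pf(4) by blast
lemma act_mult: "g \<in> carrier G \<Longrightarrow> h \<in> carrier G \<Longrightarrow> y \<in> U \<Longrightarrow> act (h \<otimes>\<^bsub>G\<^esub> g) y = act h (act g y)"
  using pf(5) by blast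
lemma Gs: "g \<in> carrier G \<Longrightarrow> y \<in> U \<Longrightarrow> s (\<Gamma> g y) = y" using pf(8) by blast
lemma Gt: "g \<in> carrier G \<Longrightarrow> y \<in> U \<Longrightarrow> t (\<Gamma> g y) = act g y" using pf(8) by blast
lemma Gmult: "g \<in> carrier G \<Longrightarrow> h \<in> carrier G \<Longrightarrow> y \<in> U \<Longrightarrow> \<Gamma> (h \<otimes>\<^bsub>G\<^esub> g) y = cmp (\<Gamma> g y) (\<Gamma> h (act g y))"
  using pf(9) by blast
lemma Ginj: "g \<in> carrier G \<Longrightarrow> h \<in> carrier G \<Longrightarrow> y \<in> U \<Longrightarrow> z \<in> U \<Longrightarrow> \<Gamma> g y = \<Gamma> h z \<Longrightarrow> g = h \<and> y = z"
  using inj_onD[OF pf(7), of "(g,y)" "(h,z)"] by auto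

lemma Gtop: "g \<in> carrier G \<Longrightarrow> y \<in> U \<Longrightarrow> \<Gamma> g y \<in> topspace MB"
proof -
  assume a: "g \<in> carrier G" "y \<in> U"
  have "(g, y) \<in> topspace (prod_topology (discrete_topology (carrier G)) (subtopology OB U))"
    using a U_sub by auto
  then show ?thesis using lh_image[OF pf(6)] by auto
qed

lemma Mor_sub: "Mor MB s t A B \<subseteq> topspace MB" unfolding Mor_def by blast

lemma Gsurj:
  assumes m: "m \<in> Mor MB s t U U" "s m = t m"
  shows "\<exists>g\<in>carrier G. \<exists>y\<in>U. m = \<Gamma> g y"
proof -
  have "m \<in> topspace (subtopology MB (Mor MB s t U U))" using m Mor_sub by auto
  then have "m \<in> connected_component_of_set (subtopology MB (Mor MB s t U U)) m"
    by (simp add: connected_component_of_refl)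
  moreover have "connected_component_of_set (subtopology MB (Mor MB s t U U)) m
          \<subseteq> (\<lambda>(g, y). \<Gamma> g y) ` (carrier G \<times> U)" using pf(10) m by blast
  ultimately have "m \<in> (\<lambda>(g, y). \<Gamma> g y) ` (carrier G \<times> U)" by blast
  then show ?thesis by auto
qed

lemma Gone: assumes x: "x \<in> U" shows "\<Gamma> \<one>\<^bsub>G\<^esub> x = e x"
proof -
  have xt: "x \<in> topspace OB" using x U_sub by blast
  have ex: "e x \<in> Mor MB s t U U" "s (e x) = t (e x)" using cf(1,5,6) xt x unfolding Mor_def by auto
  obtain k y where k: "k \<in> carrier G" "y \<in> U" "e x = \<Gamma> k y" using Gsurj[OF ex] by blast
  have "y = x" using Gs[OF k(1,2)] k(3) cf(5)[OF xt] by simp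
  have akx: "act k x = x" using Gt[OF k(1,2)] k(3) cf(6)[OF xt] \<open>y = x\<close> by simp
  have "cmp (e x) (e x) = e x" using cf(7)[OF cf(1)[OF xt]] cf(5)[OF xt] by simp
  then have "\<Gamma> (k \<otimes>\<^bsub>G\<^esub> k) x = \<Gamma> k x" using Gmult[OF k(1) k(1) x] akx k(3) \<open>y = x\<close> by simp
  then have "k \<otimes>\<^bsub>G\<^esub> k = k" using Ginj[OF group.subgroupE(4)[OF grp group.subgroup_self[OF grp]] k(1) x x] k(1) by (meson Ginj grp monoid.m_closed group.is_monoid x)
  then have "k = \<one>\<^bsub>G\<^esub>" using k(1) grp by (metis group.l_cancel_one' monoid.one_closed group.is_monoid)
  then show ?thesis using k(3) \<open>y = x\<close> by simp
qed


lemma stab_bij: assumes x: "x \<in> U"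
  shows "bij_betw (\<lambda>g. \<Gamma> g x) (stabilizer G act x) (Mor MB s t {x} {x})"
  unfolding bij_betw_def
proof (intro conjI)
  show "inj_on (\<lambda>g. \<Gamma> g x) (stabilizer G act x)"
    by (rule inj_onI) (use Ginj x in \<open>auto simp: stabilizer_def\<close>)
  show "(\<lambda>g. \<Gamma> g x) ` stabilizer G act x = Mor MB s t {x} {x}"
  proof
    show "(\<lambda>g. \<Gamma> g x) ` stabilizer G act x \<subseteq> Mor MB s t {x} {x}"
      using Gtop Gs Gt x by (auto simp: stabilizer_def Mor_def)
    show "Mor MB s t {x} {x} \<subseteq> (\<lambda>g. \<Gamma> g x) ` stabilizer G act x"
    proof
      fix m assume m: "m \<in> Mor MB s t {x} {x}"
      then have "m \<in> Mor MB s t U U" "s m = t m" using x by (auto simp: Mor_def)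
      then obtain g y where g: "g \<in> carrier G" "y \<in> U" "m = \<Gamma> g y" using Gsurj by blast
      have "y = x" using m g Gs by (auto simp: Mor_def)
      moreover have "act g x = x" using m g Gt \<open>y = x\<close> by (auto simp: Mor_def)
      ultimately show "m \<in> (\<lambda>g. \<Gamma> g x) ` stabilizer G act x"
        using g by (auto simp: stabilizer_def)
    qed
  qed
qed

lemma stab_mult: "x \<in> U \<Longrightarrow> g \<in> stabilizer G act x \<Longrightarrow> h \<in> stabilizer G act x \<Longrightarrow>
    \<Gamma> (h \<otimes>\<^bsub>G\<^esub> g) x = cmp (\<Gamma> g x) (\<Gamma> h x)"
  using Gmult by (auto simp: stabilizer_def)

lemma Mor_group: assumes x: "x \<in> U" shows "group (MorGroup MB s t e cmp x)"
proof -
  have xt: "x \<in> topspace OB" using x U_sub by blast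
  have C: "carrier (MorGroup MB s t e cmp x) = Mor MB s t {x} {x}"
    "\<And>a b. a \<otimes>\<^bsub>MorGroup MB s t e cmp x\<^esub> b = cmp a b"
    "\<one>\<^bsub>MorGroup MB s t e cmp x\<^esub> = e x"
    by (simp_all add: MorGroup_def)
  show ?thesis
  proof (rule groupI, unfold C)
    fix a b assume "a \<in> Mor MB s t {x} {x}" "b \<in> Mor MB s t {x} {x}"
    then show "cmp a b \<in> Mor MB s t {x} {x}" using cf(4,9,10) by (auto simp: Mor_def)
  next
    show "e x \<in> Mor MB s t {x} {x}" using cf(1,5,6) xt by (auto simp: Mor_def)
  next
    fix a b c assume "a \<in> Mor MB s t {x} {x}" "b \<in> Mor MB s t {x} {x}" "c \<in> Mor MB s t {x} {x}"
    then show "cmp (cmp a b) c = cmp a (cmp b c)" using cf(11) by (auto simp: Mor_def)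
  next
    fix a assume "a \<in> Mor MB s t {x} {x}"
    then show "cmp (e x) a = a" using cf(7) by (auto simp: Mor_def)
  next
    fix a assume a: "a \<in> Mor MB s t {x} {x}"
    then obtain k where k: "k \<in> stabilizer G act x" "a = \<Gamma> k x"
      using stab_bij[OF x] unfolding bij_betw_def by blast
    have kc: "k \<in> carrier G" "act k x = x" using k by (auto simp: stabilizer_def)
    have ic: "inv\<^bsub>G\<^esub> k \<in> carrier G" using group.inv_closed[OF grp kc(1)] .
    have "act (inv\<^bsub>G\<^esub> k) x = act (inv\<^bsub>G\<^esub> k) (act k x)" using kc by simp
    also have "\<dots> = act (inv\<^bsub>G\<^esub> k \<otimes>\<^bsub>G\<^esub> k) x" using act_mult[OF kc(1) ic x] by simp
    also have "\<dots> = x" using group.l_inv[OF grp kc(1)] act_one[OF x] by simp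
    finally have ik: "inv\<^bsub>G\<^esub> k \<in> stabilizer G act x" using ic by (simp add: stabilizer_def)
    have "cmp (\<Gamma> (inv\<^bsub>G\<^esub> k) x) (\<Gamma> k x) = \<Gamma> (k \<otimes>\<^bsub>G\<^esub> inv\<^bsub>G\<^esub> k) x"
      using stab_mult[OF x ik k(1)] by simp
    also have "\<dots> = e x" using group.r_inv[OF grp kc(1)] Gone[OF x] by simp
    finally have "cmp (\<Gamma> (inv\<^bsub>G\<^esub> k) x) a = e x" using k(2) by simp
    moreover have "\<Gamma> (inv\<^bsub>G\<^esub> k) x \<in> Mor MB s t {x} {x}"
      using stab_bij[OF x] ik unfolding bij_betw_def by blast
    ultimately show "\<exists>y\<in>Mor MB s t {x} {x}. cmp y a = e x" by blast
  qed
qed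


lemma conj_iso:
  assumes xt: "x \<in> topspace OB" and yt: "y \<in> topspace OB"
    and a: "a \<in> topspace MB" "s a = y" "t a = x"
    and b: "b \<in> topspace MB" "s b = x" "t b = y"
    and ba: "cmp b a = e x" and ab: "cmp a b = e y"
  shows "MorGroup MB s t e cmp x \<cong> MorGroup MB s t e cmp y"
proof -
  define \<phi> where "\<phi> m = cmp (cmp a m) b" for m
  define \<psi> where "\<psi> n = cmp (cmp b n) a" for n
  have ass: "\<And>m m' m''. m \<in> topspace MB \<Longrightarrow> m' \<in> topspace MB \<Longrightarrow> m'' \<in> topspace MB \<Longrightarrow> t m = s m' \<Longrightarrow> t m' = s m'' \<Longrightarrow>
          cmp (cmp m m') m'' = cmp m (cmp m' m'')" using cf(11) .
  note cl = cf(4) and sc = cf(9) and tc = cf(10)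
  have bax: "cmp b (cmp a X) = X" if "X \<in> topspace MB" "s X = x" for X
  proof -
    have "cmp b (cmp a X) = cmp (cmp b a) X" using ass[OF b(1) a(1) that(1)] a b that by simp
    also have "\<dots> = X" using ba cf(7)[OF that(1)] that by simp
    finally show ?thesis .
  qed
  have aby: "cmp a (cmp b X) = X" if "X \<in> topspace MB" "s X = y" for X
  proof -
    have "cmp a (cmp b X) = cmp (cmp a b) X" using ass[OF a(1) b(1) that(1)] a b that by simp
    also have "\<dots> = X" using ab cf(7)[OF that(1)] that by simp
    finally show ?thesis .
  qed
  have phiM: "\<phi> m \<in> Mor MB s t {y} {y}" if "m \<in> Mor MB s t {x} {x}" for m
    using that a b cl sc tc unfolding \<phi>_def Mor_def by auto
  have psiM: "\<psi> n \<in> Mor MB s t {x} {x}" if "n \<in> Mor MB s t {y} {y}" for n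
    using that a b cl sc tc unfolding \<psi>_def Mor_def by auto
  have phiR: "\<phi> m = cmp a (cmp m b)" if "m \<in> Mor MB s t {x} {x}" for m
    using that a b ass unfolding \<phi>_def Mor_def by auto
  have psiR: "\<psi> n = cmp b (cmp n a)" if "n \<in> Mor MB s t {y} {y}" for n
    using that a b ass unfolding \<psi>_def Mor_def by auto
  have hom: "\<phi> (cmp m n) = cmp (\<phi> m) (\<phi> n)" if m: "m \<in> Mor MB s t {x} {x}" and n: "n \<in> Mor MB s t {x} {x}" for m n
  proof -
    have mt: "m \<in> topspace MB" "s m = x" "t m = x" and nt: "n \<in> topspace MB" "s n = x" "t n = x"
      using m n by (auto simp: Mor_def)
    have nb: "cmp n b \<in> topspace MB" "s (cmp n b) = x" "t (cmp n b) = y" using cl sc tc nt b by auto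
    have anb: "cmp a (cmp n b) \<in> topspace MB" "s (cmp a (cmp n b)) = y" using cl sc nb a by auto
    have mb: "cmp m b \<in> topspace MB" "s (cmp m b) = x" "t (cmp m b) = y" using cl sc tc mt b by auto
    have "cmp (\<phi> m) (\<phi> n) = cmp (cmp a (cmp m b)) (cmp a (cmp n b))" using phiR m n by simp
    also have "\<dots> = cmp a (cmp (cmp m b) (cmp a (cmp n b)))"
      using ass[OF a(1) mb(1) anb(1)] a mb anb by simp
    also have "\<dots> = cmp a (cmp m (cmp b (cmp a (cmp n b))))"
      using ass[OF mt(1) b(1) anb(1)] mt b anb by simp
    also have "\<dots> = cmp a (cmp m (cmp n b))" using bax[OF nb(1,2)] by simp
    also have "\<dots> = cmp a (cmp (cmp m n) b)" using ass[OF mt(1) nt(1) b(1)] mt nt b by simp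
    also have "\<dots> = \<phi> (cmp m n)"
    proof -
      have "cmp m n \<in> Mor MB s t {x} {x}" using mt nt cl sc tc by (auto simp: Mor_def)
      then show ?thesis using phiR by simp
    qed
    finally show ?thesis by simp
  qed
  have inv1: "\<psi> (\<phi> m) = m" if m: "m \<in> Mor MB s t {x} {x}" for m
  proof -
    have mt: "m \<in> topspace MB" "s m = x" "t m = x" using m by (auto simp: Mor_def)
    have mb: "cmp m b \<in> topspace MB" "s (cmp m b) = x" "t (cmp m b) = y" using cl sc tc mt b by auto
    have amb: "cmp a (cmp m b) \<in> topspace MB" "s (cmp a (cmp m b)) = y" "t (cmp a (cmp m b)) = y"
      using cl sc tc mb a by auto
    have "\<psi> (\<phi> m) = cmp b (cmp (cmp a (cmp m b)) a)" using psiR phiM[OF m] phiR[OF m] by simp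
    also have "\<dots> = cmp b (cmp a (cmp (cmp m b) a))" using ass[OF a(1) mb(1) a(1)] a mb by simp
    also have "\<dots> = cmp (cmp m b) a"
      using bax[of "cmp (cmp m b) a"] cl sc mb a by simp
    also have "\<dots> = cmp m (cmp b a)" using ass[OF mt(1) b(1) a(1)] mt b a by simp
    also have "\<dots> = m" using ba cf(8)[OF mt(1)] mt by simp
    finally show ?thesis .
  qed
  have inv2: "\<phi> (\<psi> n) = n" if n: "n \<in> Mor MB s t {y} {y}" for n
  proof -
    have nt: "n \<in> topspace MB" "s n = y" "t n = y" using n by (auto simp: Mor_def)
    have na: "cmp n a \<in> topspace MB" "s (cmp n a) = y" "t (cmp n a) = x" using cl sc tc nt a by auto
    have bna: "cmp b (cmp n a) \<in> topspace MB" "s (cmp b (cmp n a)) = x" "t (cmp b (cmp n a)) = x"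
      using cl sc tc na b by auto
    have "\<phi> (\<psi> n) = cmp a (cmp (cmp b (cmp n a)) b)" using phiR psiM[OF n] psiR[OF n] by simp
    also have "\<dots> = cmp a (cmp b (cmp (cmp n a) b))" using ass[OF b(1) na(1) b(1)] b na by simp
    also have "\<dots> = cmp (cmp n a) b"
      using aby[of "cmp (cmp n a) b"] cl sc na b by simp
    also have "\<dots> = cmp n (cmp a b)" using ass[OF nt(1) a(1) b(1)] nt b a by simp
    also have "\<dots> = n" using ab cf(8)[OF nt(1)] nt by simp
    finally show ?thesis .
  qed
  have "\<phi> \<in> Group.iso (MorGroup MB s t e cmp x) (MorGroup MB s t e cmp y)"
    unfolding Group.iso_def
  proof (intro CollectI conjI)
    show "\<phi> \<in> hom (MorGroup MB s t e cmp x) (MorGroup MB s t e cmp y)"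
      unfolding hom_def using phiM hom by (auto simp: MorGroup_def)
    show "bij_betw \<phi> (carrier (MorGroup MB s t e cmp x)) (carrier (MorGroup MB s t e cmp y))"
      unfolding MorGroup_def using phiM psiM inv1 inv2
      by (auto intro!: bij_betw_byWitness[where f'=\<psi>])
  qed
  then show ?thesis unfolding is_iso_def by blast
qed


lemma Mor_iso: assumes x: "x \<in> U" and g: "g \<in> carrier G"
  shows "MorGroup MB s t e cmp x \<cong> MorGroup MB s t e cmp (act g x)"
proof -
  define y where "y = act g x"
  have y: "y \<in> U" using act_U[OF g x] y_def by simp
  have ig: "inv\<^bsub>G\<^esub> g \<in> carrier G" using group.inv_closed[OF grp g] .
  have iy: "act (inv\<^bsub>G\<^esub> g) y = x"
    using act_mult[OF g ig x] group.l_inv[OF grp g] act_one[OF x] y_def by simp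
  have ba: "cmp (\<Gamma> g x) (\<Gamma> (inv\<^bsub>G\<^esub> g) y) = e x"
    using Gmult[OF g ig x] group.l_inv[OF grp g] Gone[OF x] y_def by simp
  have ab: "cmp (\<Gamma> (inv\<^bsub>G\<^esub> g) y) (\<Gamma> g x) = e y"
    using Gmult[OF ig g y] group.r_inv[OF grp g] Gone[OF y] iy by simp
  show ?thesis unfolding y_def[symmetric]
    by (rule conj_iso[where a="\<Gamma> (inv\<^bsub>G\<^esub> g) y" and b="\<Gamma> g x"])
       (use x y U_sub Gtop g ig Gs Gt iy ba ab y_def in auto)
qed

lemma orbG_act: assumes g: "g \<in> carrier G" and y: "y \<in> U" shows "orbG G act (act g y) = orbG G act y"
proof
  show "orbG G act (act g y) \<subseteq> orbG G act y"
  proof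
    fix z assume "z \<in> orbG G act (act g y)"
    then obtain h where h: "h \<in> carrier G" "z = act h (act g y)" by (auto simp: orbG_def)
    have hc: "h \<otimes>\<^bsub>G\<^esub> g \<in> carrier G" using h(1) g by (simp add: group.subgroupE(4)[OF grp group.subgroup_self[OF grp]])
    have "z = act (h \<otimes>\<^bsub>G\<^esub> g) y" using act_mult[OF g h(1) y] h by simp
    then show "z \<in> orbG G act y" using hc unfolding orbG_def by blast
  qed
  show "orbG G act y \<subseteq> orbG G act (act g y)"
  proof
    fix z assume "z \<in> orbG G act y"
    then obtain h where h: "h \<in> carrier G" "z = act h y" by (auto simp: orbG_def)
    have ig: "inv\<^bsub>G\<^esub> g \<in> carrier G" using group.inv_closed[OF grp g] .
    have hc: "h \<otimes>\<^bsub>G\<^esub> inv\<^bsub>G\<^esub> g \<in> carrier G" using grp h(1) ig by (simp add: group.subgroupE(4)[OF grp group.subgroup_self[OF grp]])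
    have "act (h \<otimes>\<^bsub>G\<^esub> inv\<^bsub>G\<^esub> g) (act g y) = act ((h \<otimes>\<^bsub>G\<^esub> inv\<^bsub>G\<^esub> g) \<otimes>\<^bsub>G\<^esub> g) y"
      using act_mult[OF g hc y] by simp
    also have "\<dots> = act h y" using grp h(1) ig g
      by (metis group.inv_solve_right group.subgroupE(4) group.subgroup_self)
    finally have "z = act (h \<otimes>\<^bsub>G\<^esub> inv\<^bsub>G\<^esub> g) (act g y)" using h(2) by simp
    then show "z \<in> orbG G act (act g y)" using hc unfolding orbG_def by blast
  qed
qed

lemma piB_act: assumes g: "g \<in> carrier G" and y: "y \<in> U" shows "piB MB s t (act g y) = piB MB s t y"
  using morrel_step1[OF Gtop[OF g y]] Gs[OF g y] Gt[OF g y] piB_eq morrel_sym by metis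

lemma orb_self: "y \<in> U \<Longrightarrow> y \<in> orbG G act y"
  using act_one[of y] monoid.one_closed[OF group.is_monoid[OF grp]] unfolding orbG_def by force

lemma Gbar_orb: assumes y: "y \<in> U" shows "Gamma_bar MB s t (orbG G act y) = piB MB s t y"
proof -
  have "(SOME z. z \<in> orbG G act y) \<in> orbG G act y" using orb_self[OF y] by (rule someI)
  then obtain g where g: "g \<in> carrier G" "(SOME z. z \<in> orbG G act y) = act g y" by (auto simp: orbG_def)
  then show ?thesis unfolding Gamma_bar_def using piB_act[OF g(1) y] by simp
qed

abbreviation "X \<equiv> orbit_space OB U G act"
abbreviation "Y \<equiv> subtopology (realization OB MB s t) (piB MB s t ` U)"

lemma topX: "topspace X = orbG G act ` U"
  unfolding orbit_space_def topspace_quotient using U_sub by auto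

lemma openX: "openin X W \<longleftrightarrow> W \<subseteq> orbG G act ` U \<and> openin (subtopology OB U) {y \<in> U. orbG G act y \<in> W}"
proof -
  have "topspace (subtopology OB U) = U" using U_sub by auto
  then show ?thesis unfolding orbit_space_def openin_quotient_topology by simp
qed

lemma topY: "topspace Y = piB MB s t ` U"
  unfolding realization_def topspace_subtopology topspace_quotient using U_sub by auto

lemma Gbar_img: "Gamma_bar MB s t ` topspace X = piB MB s t ` U"
  unfolding topX image_image using Gbar_orb by auto

lemma U_openY: "openin (realization OB MB s t) (piB MB s t ` U)"
  using piB_image_open[OF cat U_open] .

lemma Gbar_open: "open_map X Y (Gamma_bar MB s t)"
  unfolding open_map_def
proof (intro allI impI)
  fix W assume W: "openin X W"
  define O' where "O' = {y \<in> topspace (subtopology OB U). orbG G act y \<in> W}"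
  have "openin (subtopology OB U) O'"
    using W unfolding O'_def orbit_space_def openin_quotient_topology by blast
  then have O'o: "openin OB O'" using openin_trans_full U_open by blast
  have WX: "W \<subseteq> orbG G act ` U" using openin_subset[OF W] topX by simp
  have O'U: "O' \<subseteq> U" unfolding O'_def by auto
  have eq: "Gamma_bar MB s t ` W = piB MB s t ` O'"
  proof
    show "Gamma_bar MB s t ` W \<subseteq> piB MB s t ` O'"
    proof
      fix p assume "p \<in> Gamma_bar MB s t ` W"
      then obtain Q where Q: "Q \<in> W" "p = Gamma_bar MB s t Q" by blast
      then obtain y where "y \<in> U" "Q = orbG G act y" using WX by blast
      then show "p \<in> piB MB s t ` O'" using Q Gbar_orb U_sub unfolding O'_def by auto
    qed
    show "piB MB s t ` O' \<subseteq> Gamma_bar MB s t ` W"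
      using Gbar_orb O'U unfolding O'_def by force
  qed
  have "openin (realization OB MB s t) (piB MB s t ` O')" using piB_image_open[OF cat O'o] .
  moreover have "piB MB s t ` O' = piB MB s t ` O' \<inter> piB MB s t ` U" using O'U by blast
  ultimately show "openin Y (Gamma_bar MB s t ` W)" unfolding eq openin_subtopology by blast
qed

lemma Gbar_cont: "continuous_map X Y (Gamma_bar MB s t)"
  unfolding continuous_map
proof (intro conjI allI impI)
  show "Gamma_bar MB s t ` topspace X \<subseteq> topspace Y" using Gbar_img topY by simp
  fix V assume "openin Y V"
  then obtain T where T: "openin (realization OB MB s t) T" "V = T \<inter> piB MB s t ` U"
    unfolding openin_subtopology by blast
  have To: "openin OB {x \<in> topspace OB. piB MB s t x \<in> T}"
    using T(1) unfolding realization_def openin_quotient_topology by blast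
  have eq: "{y \<in> topspace (subtopology OB U). orbG G act y \<in> {Q \<in> topspace X. Gamma_bar MB s t Q \<in> V}}
        = {x \<in> topspace OB. piB MB s t x \<in> T} \<inter> U"
    using U_sub Gbar_orb T(2) by (auto simp: topX)
  have "openin (subtopology OB U) ({x \<in> topspace OB. piB MB s t x \<in> T} \<inter> U)"
    using To openin_subtopology by blast
  moreover have "{y \<in> U. orbG G act y \<in> {Q \<in> topspace X. Gamma_bar MB s t Q \<in> V}} = {x \<in> topspace OB. piB MB s t x \<in> T} \<inter> U"
    using eq U_sub by auto
  ultimately show "openin X {Q \<in> topspace X. Gamma_bar MB s t Q \<in> V}"
    unfolding openX by (auto simp: topX)
qed


lemma restrict_homeo:
  assumes c: "continuous_map T1 T2 f" and o: "open_map T1 T2 f" and W: "openin T1 W" and i: "inj_on f W"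
  shows "homeomorphic_map (subtopology T1 W) (subtopology T2 (f ` W)) f"
proof (rule bijective_open_imp_homeomorphic_map)
  have WT: "W \<subseteq> topspace T1" using openin_subset[OF W] .
  have fW: "openin T2 (f ` W)" using o W unfolding open_map_def by blast
  show "continuous_map (subtopology T1 W) (subtopology T2 (f ` W)) f"
    by (rule continuous_map_into_subtopology[OF continuous_map_from_subtopology[OF c]]) auto
  show "open_map (subtopology T1 W) (subtopology T2 (f ` W)) f"
    unfolding open_map_def
  proof (intro allI impI)
    fix S assume S: "openin (subtopology T1 W) S"
    then have "openin T1 S" using openin_trans_full W by blast
    then have "openin T2 (f ` S)" using o unfolding open_map_def by blast
    moreover have "S \<subseteq> W" using openin_subset[OF S] by auto
    ultimately show "openin (subtopology T2 (f ` W)) (f ` S)"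
      unfolding openin_subtopology by blast
  qed
  show "f ` topspace (subtopology T1 W) = topspace (subtopology T2 (f ` W))"
    using WT openin_subset[OF fW] by auto
  show "inj_on f (topspace (subtopology T1 W))" using i inj_on_subset by fastforce
qed

lemma Gbar_lh: "local_homeo X Y (Gamma_bar MB s t)"
  unfolding local_homeo_def
proof (intro conjI ballI)
  show "Gamma_bar MB s t ` topspace X \<subseteq> topspace Y" using Gbar_img topY by simp
  fix Q assume "Q \<in> topspace X"
  then obtain W where W: "openin X W" "Q \<in> W" "inj_on (Gamma_bar MB s t) W" using pf(11) by blast
  show "\<exists>V. openin X V \<and> Q \<in> V \<and> openin Y (Gamma_bar MB s t ` V) \<and>
          homeomorphic_map (subtopology X V) (subtopology Y (Gamma_bar MB s t ` V)) (Gamma_bar MB s t)"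
    using W Gbar_open restrict_homeo[OF Gbar_cont Gbar_open W(1) W(3)] unfolding open_map_def by blast
qed

lemma groupoid_mor:
  assumes gpd: "is_groupoid OB MB s t e cmp" and x: "x \<in> topspace OB" and r: "(x, y) \<in> morrel MB s t"
  shows "\<exists>m\<in>topspace MB. s m = x \<and> t m = y"
  using r unfolding morrel_def Let_def
proof (induction rule: rtrancl_induct)
  case base then show ?case using cf(1,5,6) x by blast
next
  case (step y z)
  then obtain m where m: "m \<in> topspace MB" "s m = x" "t m = y" by blast
  from step(2) obtain m' where m': "m' \<in> topspace MB" "(y = s m' \<and> z = t m') \<or> (y = t m' \<and> z = s m')" by blast
  from m'(2) show ?case
  proof (elim disjE conjE)
    assume "y = s m'" "z = t m'"
    then show ?case using m m'(1) cf(4,9,10) by (intro bexI[of _ "cmp m m'"]) auto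
  next
    assume yz: "y = t m'" "z = s m'"
    obtain n where n: "n \<in> topspace MB" "s n = t m'" "t n = s m'" using gpd m'(1) unfolding is_groupoid_def by blast
    show ?case using m n yz cf(4,9,10) by (intro bexI[of _ "cmp m n"]) auto
  qed
qed

lemma Gbar_inj:
  assumes gpd: "is_groupoid OB MB s t e cmp" and su: "(\<lambda>(g, y). \<Gamma> g y) ` (carrier G \<times> U) = Mor MB s t U U"
  shows "inj_on (Gamma_bar MB s t) (topspace X)"
proof (rule inj_onI)
  fix Q1 Q2 assume Q: "Q1 \<in> topspace X" "Q2 \<in> topspace X" "Gamma_bar MB s t Q1 = Gamma_bar MB s t Q2"
  then obtain y1 y2 where y: "y1 \<in> U" "y2 \<in> U" "Q1 = orbG G act y1" "Q2 = orbG G act y2" by (auto simp: topX)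
  then have "piB MB s t y1 = piB MB s t y2" using Q(3) Gbar_orb by simp
  then have r: "(y1, y2) \<in> morrel MB s t" by (rule piB_eq[THEN iffD1])
  have y1t: "y1 \<in> topspace OB" using y(1) U_sub by blast
  obtain m where m: "m \<in> topspace MB" "s m = y1" "t m = y2" using groupoid_mor[OF gpd y1t r] by blast
  then have "m \<in> Mor MB s t U U" unfolding Mor_def using y by simp
  then have "m \<in> (\<lambda>(g, y). \<Gamma> g y) ` (carrier G \<times> U)" by (simp only: su)
  then obtain g z where g: "g \<in> carrier G" "z \<in> U" "m = \<Gamma> g z" by auto
  have "z = y1" using m(2) Gs[OF g(1,2)] g(3) by simp
  moreover have "y2 = act g z" using m(3) Gt[OF g(1,2)] g(3) by simp
  ultimately show "Q1 = Q2" using y orbG_act[OF g(1) y(1)] by simp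
qed

lemma Gbar_homeo:
  assumes gpd: "is_groupoid OB MB s t e cmp" and su: "(\<lambda>(g, y). \<Gamma> g y) ` (carrier G \<times> U) = Mor MB s t U U"
  shows "homeomorphic_map X Y (Gamma_bar MB s t)"
  using bijective_open_imp_homeomorphic_map[OF Gbar_cont Gbar_open] Gbar_img topY Gbar_inj[OF gpd su] by simp

end

theorem mainTheorem3:
  fixes OB :: "'a topology" and MB :: "'m topology"
    and s t :: "'m \<Rightarrow> 'a" and e :: "'a \<Rightarrow> 'm" and cmp :: "'m \<Rightarrow> 'm \<Rightarrow> 'm"
    and U :: "'a set" and G :: "('g, 'b) monoid_scheme"
    and act :: "'g \<Rightarrow> 'a \<Rightarrow> 'a" and \<Gamma> :: "'g \<Rightarrow> 'a \<Rightarrow> 'm"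
  assumes cat: "etale_category OB MB s t e cmp"
    and pre: "preuniformizer OB MB s t e cmp U G act \<Gamma>"
  shows
    "(\<forall>x\<in>U.
        bij_betw (\<lambda>g. \<Gamma> g x) (stabilizer G act x) (Mor MB s t {x} {x}) \<and>
        (\<forall>g\<in>stabilizer G act x. \<forall>h\<in>stabilizer G act x.
            \<Gamma> (h \<otimes>\<^bsub>G\<^esub> g) x = cmp (\<Gamma> g x) (\<Gamma> h x)) \<and>
        group (MorGroup MB s t e cmp x) \<and>
        (\<forall>g\<in>carrier G. MorGroup MB s t e cmp x \<cong> MorGroup MB s t e cmp (act g x)))
   \<and> openin (realization OB MB s t) (piB MB s t ` U)
   \<and> local_homeo (orbit_space OB U G act)
        (subtopology (realization OB MB s t) (piB MB s t ` U)) (Gamma_bar MB s t)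
   \<and> (is_groupoid OB MB s t e cmp \<and> (\<lambda>(g, y). \<Gamma> g y) ` (carrier G \<times> U) = Mor MB s t U U \<longrightarrow>
        inj_on (Gamma_bar MB s t) (topspace (orbit_space OB U G act)) \<and>
        homeomorphic_map (orbit_space OB U G act)
          (subtopology (realization OB MB s t) (piB MB s t ` U)) (Gamma_bar MB s t))"
proof -
  interpret P: PU OB MB s t e cmp U G act \<Gamma> using cat pre by (rule PU.intro)
  show ?thesis
  proof (intro conjI ballI impI)
    fix x assume x: "x \<in> U"
    show "bij_betw (\<lambda>g. \<Gamma> g x) (stabilizer G act x) (Mor MB s t {x} {x})" using P.stab_bij[OF x] .
    show "group (MorGroup MB s t e cmp x)" using P.Mor_group[OF x] .
    fix g assume g: "g \<in> carrier G"
    show "MorGroup MB s t e cmp x \<cong> MorGroup MB s t e cmp (act g x)" using P.Mor_iso[OF x g] .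
  next
    fix x g h assume "x \<in> U" "g \<in> stabilizer G act x" "h \<in> stabilizer G act x"
    then show "\<Gamma> (h \<otimes>\<^bsub>G\<^esub> g) x = cmp (\<Gamma> g x) (\<Gamma> h x)" by (rule P.stab_mult)
  next
    show "openin (realization OB MB s t) (piB MB s t ` U)" using P.U_openY .
    show "local_homeo (orbit_space OB U G act)
        (subtopology (realization OB MB s t) (piB MB s t ` U)) (Gamma_bar MB s t)" using P.Gbar_lh .
  next
    assume a: "is_groupoid OB MB s t e cmp \<and> (\<lambda>(g, y). \<Gamma> g y) ` (carrier G \<times> U) = Mor MB s t U U"
    show "inj_on (Gamma_bar MB s t) (topspace (orbit_space OB U G act))" using P.Gbar_inj a by blast
    show "homeomorphic_map (orbit_space OB U G act)
          (subtopology (realization OB MB s t) (piB MB s t ` U)) (Gamma_bar MB s t)" using P.Gbar_homeo a by blast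
  qed
qed

end
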